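(* Let $T\in\mathrm{Aut}(X,\mu)$ be an aperiodic transformation with infinite dynamical entropy and let $U\in[T]$ be such that the $T$-cocycle of $U$ has finite Shannon entropy. Then $U$ has infinite dynamical entropy. Consequently, if two aperiodic transformations are Shannon orbit equivalent, one has finite dynamical entropy if and only if the other does.
   Context: $(X,\mu)$ is a standard atomless probability space, $\mathrm{Aut}(X,\mu)$ its group of measure-preserving transformations modulo null sets. For aperiodic $T$, $[T]$ is the set of $U\in\mathrm{Aut}(X,\mu)$ with $U(x)=T^{c_U(x)}(x)$ for a (unique) measurable $c_U:X\to\mathbb Z$, the $T$-cocycle. The Shannon entropy of measurable $f:X\to I$, $I$ countable, is $H(f)=-\sum_i\mu(f^{-1}\{i\})\log\mu(f^{-1}\{i\})$. A measurable $f:X\to I$ ($I$ countable) is $T$-dynamically generating if there is a conull $X_0$ such that for all distinct $x,y\in X_0$ there is $n\in\mathbb Z$ with $f(T^nx)\ne f(T^ny)$. The dynamical entropy of $T$ is the infimum of $H(f)$ over $T$-dynamically generating $f$. Shannon orbit equivalence of aperiodic $T_1,T_2$: there is $S\in\mathrm{Aut}(X,\mu)$ with $ST_1S^{-1}$, $T_2$ having the same orbits and both cocycles ($T_2$-cocycle of $ST_1S^{-1}$, $ST_1S^{-1}$-cocycle of $T_2$) of finite Shannon entropy. *)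

theory Defs
  imports "HOL-Analysis.Analysis"
begin

text \<open>The standard atomless probability space: [0,1] with (Borel) Lebesgue measure.\<close>
definition stdX :: "real measure" where
  "stdX = restrict_space lborel {0..1}"

text \<open>Elements of Aut(X,mu), represented by measurable maps; invertible modulo null sets.\<close>
definition aut :: "'a measure \<Rightarrow> ('a \<Rightarrow> 'a) \<Rightarrow> bool" where
  "aut M T \<longleftrightarrow> T \<in> M \<rightarrow>\<^sub>M M \<and> distr M M T = M \<and>
     (\<exists>S \<in> M \<rightarrow>\<^sub>M M. distr M M S = M \<and> (AE x in M. S (T x) = x) \<and> (AE x in M. T (S x) = x))"

definition aut_inv :: "'a measure \<Rightarrow> ('a \<Rightarrow> 'a) \<Rightarrow> ('a \<Rightarrow> 'a)" where
  "aut_inv M T = (SOME S. S \<in> M \<rightarrow>\<^sub>M M \<and> distr M M S = M \<and>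
       (AE x in M. S (T x) = x) \<and> (AE x in M. T (S x) = x))"

definition tpow :: "'a measure \<Rightarrow> ('a \<Rightarrow> 'a) \<Rightarrow> int \<Rightarrow> 'a \<Rightarrow> 'a" where
  "tpow M T k x = (if 0 \<le> k then (T ^^ nat k) x else (aut_inv M T ^^ nat (- k)) x)"

definition aperiodic :: "'a measure \<Rightarrow> ('a \<Rightarrow> 'a) \<Rightarrow> bool" where
  "aperiodic M T \<longleftrightarrow> aut M T \<and> (AE x in M. \<forall>n::nat. 0 < n \<longrightarrow> (T ^^ n) x \<noteq> x)"

definition full_group_cocycle :: "'a measure \<Rightarrow> ('a \<Rightarrow> 'a) \<Rightarrow> ('a \<Rightarrow> 'a) \<Rightarrow> ('a \<Rightarrow> int) \<Rightarrow> bool" where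
  "full_group_cocycle M T U c \<longleftrightarrow> aut M U \<and> c \<in> M \<rightarrow>\<^sub>M count_space UNIV \<and>
     (AE x in M. U x = tpow M T (c x) x)"

definition shannon_entropy :: "'a measure \<Rightarrow> ('a \<Rightarrow> 'b) \<Rightarrow> ennreal" where
  "shannon_entropy M f = (\<integral>\<^sup>+ i. ennreal (- measure M (f -` {i} \<inter> space M)
        * ln (measure M (f -` {i} \<inter> space M))) \<partial>count_space UNIV)"

definition dyn_generating :: "'a measure \<Rightarrow> ('a \<Rightarrow> 'a) \<Rightarrow> ('a \<Rightarrow> 'b) \<Rightarrow> bool" where
  "dyn_generating M T f \<longleftrightarrow> (\<exists>X0 \<in> sets M. emeasure M (space M - X0) = 0 \<and>
     (\<forall>x\<in>X0. \<forall>y\<in>X0. x \<noteq> y \<longrightarrow> (\<exists>n::int. f (tpow M T n x) \<noteq> f (tpow M T n y))))"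

text \<open>Dynamical entropy; countable label sets are represented by nat (w.l.o.g.).\<close>
definition dyn_entropy :: "'a measure \<Rightarrow> ('a \<Rightarrow> 'a) \<Rightarrow> ennreal" where
  "dyn_entropy M T = (INF f \<in> {f :: 'a \<Rightarrow> nat. f \<in> M \<rightarrow>\<^sub>M count_space UNIV \<and> dyn_generating M T f}.
       shannon_entropy M f)"

definition shannon_oe :: "'a measure \<Rightarrow> ('a \<Rightarrow> 'a) \<Rightarrow> ('a \<Rightarrow> 'a) \<Rightarrow> bool" where
  "shannon_oe M T1 T2 \<longleftrightarrow> (\<exists>S. aut M S \<and>
     (let T1' = S \<circ> T1 \<circ> aut_inv M S in
       (\<exists>c. full_group_cocycle M T2 T1' c \<and> shannon_entropy M c < \<infinity>) \<and>
       (\<exists>d. full_group_cocycle M T1' T2 d \<and> shannon_entropy M d < \<infinity>)))"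

end

theory Submission imports Defs "HOL-Library.Countable"
begin


lemma aut_inv_spec:
  assumes "aut M T"
  shows "aut_inv M T \<in> M \<rightarrow>\<^sub>M M \<and> distr M M (aut_inv M T) = M \<and>
       (AE x in M. aut_inv M T (T x) = x) \<and> (AE x in M. T (aut_inv M T x) = x)"
proof -
  from assms obtain S where "S \<in> M \<rightarrow>\<^sub>M M \<and> distr M M S = M \<and> (AE x in M. S (T x) = x) \<and> (AE x in M. T (S x) = x)"
    unfolding aut_def by blast
  then show ?thesis unfolding aut_inv_def by (rule someI[where P="\<lambda>S. S \<in> M \<rightarrow>\<^sub>M M \<and> distr M M S = M \<and> (AE x in M. S (T x) = x) \<and> (AE x in M. T (S x) = x)"])
qed

lemma aut_inv_aut: "aut M T \<Longrightarrow> aut M (aut_inv M T)"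
  using aut_inv_spec[of M T] unfolding aut_def by blast

lemma AE_mp_comp:
  assumes "g \<in> M \<rightarrow>\<^sub>M M" "distr M M g = M" "AE x in M. P x"
  shows "AE x in M. P (g x)"
proof -
  have "AE x in distr M M g. P x" unfolding assms(2) by (rule assms(3))
  then show ?thesis by (rule AE_distrD[OF assms(1)])
qed

lemma foldr_meas:
  assumes "\<And>i. g i \<in> M \<rightarrow>\<^sub>M M" "\<And>i. distr M M (g i) = M"
  shows "foldr g w \<in> M \<rightarrow>\<^sub>M M \<and> distr M M (foldr g w) = M"
proof (induction w)
  case Nil
  then show ?case by (simp add: id_def distr_id)
next
  case (Cons a w)
  have m: "g a \<circ> foldr g w \<in> M \<rightarrow>\<^sub>M M" using Cons assms by (auto intro: measurable_comp)
  have "distr M M (g a \<circ> foldr g w) = distr (distr M M (foldr g w)) M (g a)"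
    using Cons assms by (subst distr_distr) (auto simp: comp_def)
  also have "\<dots> = M" using Cons assms by simp
  finally show ?case using m by (simp add: comp_def)
qed

lemma inv_set:
  fixes g :: "nat \<Rightarrow> 'a \<Rightarrow> 'a"
  assumes "\<And>i. g i \<in> M \<rightarrow>\<^sub>M M" "\<And>i. distr M M (g i) = M" "AE x in M. P x"
  shows "\<exists>G \<in> sets M. emeasure M (space M - G) = 0 \<and> (\<forall>x\<in>G. P x) \<and>
           (\<forall>i. \<forall>x\<in>G. g i x \<in> G)"
proof -
  obtain N where N: "{x \<in> space M. \<not> P x} \<subseteq> N" "emeasure M N = 0" "N \<in> sets M"
    using AE_E[OF assms(3)] by blast
  define B where "B = space M - N"
  have B: "B \<in> sets M" using N by (auto simp: B_def)
  have AEB: "AE x in M. x \<in> B"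
    using N by (intro AE_I[of _ _ N]) (auto simp: B_def)
  define G where "G = {x \<in> space M. \<forall>w. foldr g w x \<in> B}"
  have FM: "\<And>w. foldr g w \<in> M \<rightarrow>\<^sub>M M \<and> distr M M (foldr g w) = M"
    by (rule foldr_meas[of g M]) (use assms in auto)
  have "\<And>w. Measurable.pred M (\<lambda>x. foldr g w x \<in> B)"
    using FM B by (intro pred_sets2) auto
  then have "Measurable.pred M (\<lambda>x. \<forall>w. foldr g w x \<in> B)" by (rule pred_intros_countable)
  then have GS: "G \<in> sets M" unfolding G_def by (rule pred_def[THEN iffD1])
  have "AE x in M. \<forall>w. foldr g w x \<in> B"
    unfolding AE_all_countable
  proof
    fix w show "AE x in M. foldr g w x \<in> B"
      using FM[of w] AEB by (intro AE_mp_comp[where g="foldr g w" and P="\<lambda>x. x \<in> B"]) auto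
  qed
  then have "emeasure M {x\<in>space M. \<not> (\<forall>w. foldr g w x \<in> B)} = 0" by (rule AE_E2)
  moreover have "space M - G = {x\<in>space M. \<not> (\<forall>w. foldr g w x \<in> B)}" by (auto simp: G_def)
  ultimately have "emeasure M (space M - G) = 0" by simp
  moreover have "\<forall>x\<in>G. P x"
  proof
    fix x assume "x \<in> G"
    then have "foldr g [] x \<in> B" "x \<in> space M" unfolding G_def by blast+
    then show "P x" using N by (auto simp: B_def)
  qed
  moreover have "\<forall>i. \<forall>x\<in>G. g i x \<in> G"
  proof (intro allI ballI)
    fix i x assume x: "x \<in> G"
    have "\<forall>w. foldr g w (g i x) \<in> B"
    proof
      fix w show "foldr g w (g i x) \<in> B"
        using x unfolding G_def by (auto dest: spec[of _ "w @ [i]"])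
    qed
    moreover have "g i x \<in> space M" using x assms(1)[of i] by (auto simp: G_def measurable_def)
    ultimately show "g i x \<in> G" by (simp add: G_def)
  qed
  ultimately show ?thesis using GS by blast
qed



definition inv_on :: "'a set \<Rightarrow> ('a \<Rightarrow> 'a) \<Rightarrow> ('a \<Rightarrow> 'a) \<Rightarrow> bool" where
  "inv_on G F Fi \<longleftrightarrow> (\<forall>x\<in>G. F x \<in> G \<and> Fi x \<in> G \<and> F (Fi x) = x \<and> Fi (F x) = x)"

lemma funpow_in: "(\<forall>x\<in>G. F x \<in> G) \<Longrightarrow> x \<in> G \<Longrightarrow> (F ^^ n) x \<in> G"
  by (induction n) auto

lemma tpow_in:
  assumes "inv_on G F (aut_inv M F)" "x \<in> G"
  shows "tpow M F n x \<in> G"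
  using assms funpow_in[of G F] funpow_in[of G "aut_inv M F"]
  unfolding tpow_def inv_on_def by auto

lemma tpow_succ:
  assumes "inv_on G F (aut_inv M F)" "x \<in> G"
  shows "tpow M F (n+1) x = F (tpow M F n x)"
proof (cases "0 \<le> n")
  case True
  then have "nat (n+1) = Suc (nat n)" by simp
  then show ?thesis using True unfolding tpow_def by simp
next
  case False
  show ?thesis
  proof (cases "n = -1")
    case True
    then show ?thesis using assms unfolding tpow_def inv_on_def by simp
  next
    case False2: False
    have e: "nat (- n) = Suc (nat (- (n+1)))" using False False2 by simp
    have "(aut_inv M F ^^ nat (- (n+1))) x \<in> G"
      using assms funpow_in[of G "aut_inv M F"] unfolding inv_on_def by auto
    then show ?thesis using False False2 assms e unfolding tpow_def inv_on_def by simp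
  qed
qed

lemma tpow_pred:
  assumes "inv_on G F (aut_inv M F)" "x \<in> G"
  shows "tpow M F (n-1) x = aut_inv M F (tpow M F n x)"
proof -
  have "tpow M F n x = F (tpow M F (n-1) x)" using tpow_succ[OF assms, of "n-1"] by simp
  moreover have "tpow M F (n-1) x \<in> G" by (rule tpow_in[OF assms])
  moreover have "\<forall>z\<in>G. aut_inv M F (F z) = z" using assms(1) unfolding inv_on_def by blast
  ultimately show ?thesis by simp
qed

lemma tpow_zero[simp]: "tpow M F 0 x = x"
  by (simp add: tpow_def)

lemma tpow_add:
  assumes "inv_on G F (aut_inv M F)" "x \<in> G"
  shows "tpow M F (a+b) x = tpow M F a (tpow M F b x)"
proof (induction a rule: int_induct[where k=0])
  case base
  then show ?case by simp
next
  case (step1 i)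
  have "tpow M F (i + 1 + b) x = F (tpow M F (i+b) x)"
    using tpow_succ[OF assms, of "i+b"] by (simp add: algebra_simps)
  also have "\<dots> = tpow M F (i+1) (tpow M F b x)"
    using step1 tpow_succ[OF assms(1) tpow_in[OF assms]] by simp
  finally show ?case .
next
  case (step2 i)
  have "tpow M F (i - 1 + b) x = aut_inv M F (tpow M F (i+b) x)"
    using tpow_pred[OF assms, of "i+b"] by (simp add: algebra_simps)
  also have "\<dots> = tpow M F (i-1) (tpow M F b x)"
    using step2 tpow_pred[OF assms(1) tpow_in[OF assms]] by simp
  finally show ?case .
qed



lemma aut_meas: "aut M T \<Longrightarrow> T \<in> M \<rightarrow>\<^sub>M M \<and> distr M M T = M"
  unfolding aut_def by blast

lemma conull_AE:
  assumes "emeasure M (space M - X0) = 0" "X0 \<in> sets M"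
  shows "AE x in M. x \<in> X0"
  using assms by (intro AE_I[of _ _ "space M - X0"]) auto

lemma entropy_comp_mp:
  assumes "\<phi> \<in> M \<rightarrow>\<^sub>M M" "distr M M \<phi> = M" "f \<in> M \<rightarrow>\<^sub>M count_space UNIV"
  shows "shannon_entropy M (f \<circ> \<phi>) = shannon_entropy M f"
proof -
  have "\<And>i. measure M ((f \<circ> \<phi>) -` {i} \<inter> space M) = measure M (f -` {i} \<inter> space M)"
  proof -
    fix i
    have s: "f -` {i} \<inter> space M \<in> sets M" using assms(3) by (simp add: measurable_sets)
    have "measure M ((f \<circ> \<phi>) -` {i} \<inter> space M) = measure M (\<phi> -` (f -` {i} \<inter> space M) \<inter> space M)"
      using assms(1) by (intro arg_cong[where f="measure M"]) (auto simp: measurable_def)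
    also have "\<dots> = measure (distr M M \<phi>) (f -` {i} \<inter> space M)"
      using assms(1) s by (simp add: measure_distr)
    finally show "measure M ((f \<circ> \<phi>) -` {i} \<inter> space M) = measure M (f -` {i} \<inter> space M)"
      using assms(2) by simp
  qed
  then show ?thesis unfolding shannon_entropy_def by simp
qed

lemma conj_gen:
  fixes f :: "'a \<Rightarrow> 'b"
  assumes aT: "aut M T" and aT': "aut M T'" and a\<phi>: "aut M \<phi>"
    and comm: "AE x in M. \<phi> (T x) = T' (\<phi> x)"
    and gen: "dyn_generating M T' f"
  shows "dyn_generating M T (f \<circ> \<phi>)"
proof -
  obtain X0 where X0: "X0 \<in> sets M" "emeasure M (space M - X0) = 0"
    "\<forall>x\<in>X0. \<forall>y\<in>X0. x \<noteq> y \<longrightarrow> (\<exists>n::int. f (tpow M T' n x) \<noteq> f (tpow M T' n y))"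
    using gen unfolding dyn_generating_def by blast
  define Ti where "Ti = aut_inv M T"
  define Ti' where "Ti' = aut_inv M T'"
  define \<psi> where "\<psi> = aut_inv M \<phi>"
  note sT = aut_inv_spec[OF aT, folded Ti_def]
  note sT' = aut_inv_spec[OF aT', folded Ti'_def]
  note s\<phi> = aut_inv_spec[OF a\<phi>, folded \<psi>_def]
  define g :: "nat \<Rightarrow> 'a \<Rightarrow> 'a" where
    "g = (\<lambda>i. case i of 0 \<Rightarrow> T | Suc 0 \<Rightarrow> Ti | Suc (Suc 0) \<Rightarrow> T' | Suc (Suc (Suc 0)) \<Rightarrow> Ti' | _ \<Rightarrow> \<phi>)"
  have m1: "T \<in> M \<rightarrow>\<^sub>M M \<and> distr M M T = M" by (rule aut_meas[OF aT])
  have m2: "T' \<in> M \<rightarrow>\<^sub>M M \<and> distr M M T' = M" by (rule aut_meas[OF aT'])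
  have m3: "\<phi> \<in> M \<rightarrow>\<^sub>M M \<and> distr M M \<phi> = M" by (rule aut_meas[OF a\<phi>])
  have m4: "Ti \<in> M \<rightarrow>\<^sub>M M \<and> distr M M Ti = M" using sT by blast
  have m5: "Ti' \<in> M \<rightarrow>\<^sub>M M \<and> distr M M Ti' = M" using sT' by blast
  have gm: "\<And>i. g i \<in> M \<rightarrow>\<^sub>M M \<and> distr M M (g i) = M"
  proof -
    fix i show "g i \<in> M \<rightarrow>\<^sub>M M \<and> distr M M (g i) = M"
      unfolding g_def using m1 m2 m3 m4 m5 by (simp split: nat.split)
  qed
  have AEX: "AE x in M. \<phi> x \<in> X0"
    by (rule AE_mp_comp[OF m3[THEN conjunct1] m3[THEN conjunct2] conull_AE[OF X0(2,1)]])
  have "AE x in M. (Ti (T x) = x \<and> T (Ti x) = x \<and> Ti' (T' x) = x \<and> T' (Ti' x) = x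
      \<and> \<psi> (\<phi> x) = x \<and> \<phi> (T x) = T' (\<phi> x) \<and> \<phi> x \<in> X0)"
  proof -
    have a1: "AE x in M. Ti (T x) = x" "AE x in M. T (Ti x) = x" using sT by blast+
    have a2: "AE x in M. Ti' (T' x) = x" "AE x in M. T' (Ti' x) = x" using sT' by blast+
    have a3: "AE x in M. \<psi> (\<phi> x) = x" using s\<phi> by blast
    show ?thesis by (intro eventually_conj a1 a2 a3 comm AEX)
  qed
  then obtain G where G: "G \<in> sets M" "emeasure M (space M - G) = 0"
    "\<forall>x\<in>G. Ti (T x) = x \<and> T (Ti x) = x \<and> Ti' (T' x) = x \<and> T' (Ti' x) = x
      \<and> \<psi> (\<phi> x) = x \<and> \<phi> (T x) = T' (\<phi> x) \<and> \<phi> x \<in> X0"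
    "\<forall>i. \<forall>x\<in>G. g i x \<in> G"
    using inv_set[of g M] gm by blast
  have inG: "\<And>x. x \<in> G \<Longrightarrow> T x \<in> G \<and> Ti x \<in> G \<and> T' x \<in> G \<and> Ti' x \<in> G \<and> \<phi> x \<in> G"
  proof -
    fix x assume x: "x \<in> G"
    show "T x \<in> G \<and> Ti x \<in> G \<and> T' x \<in> G \<and> Ti' x \<in> G \<and> \<phi> x \<in> G"
      using G(4)[rule_format, OF x, of 0] G(4)[rule_format, OF x, of 1]
        G(4)[rule_format, OF x, of 2] G(4)[rule_format, OF x, of 3] G(4)[rule_format, OF x, of 4]
      by (simp add: g_def numeral_eq_Suc)
  qed
  have iT0: "inv_on G T Ti" unfolding inv_on_def using G(3) inG by blast
  have iT: "inv_on G T (aut_inv M T)" using iT0 by (simp add: Ti_def)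
  have iT0': "inv_on G T' Ti'" unfolding inv_on_def using G(3) inG by blast
  have iT': "inv_on G T' (aut_inv M T')" using iT0' by (simp add: Ti'_def)
  have key: "\<And>w n. w \<in> G \<Longrightarrow> tpow M T' n (\<phi> w) = \<phi> (tpow M T n w)"
  proof -
    fix w n assume w: "w \<in> G"
    have pw: "\<phi> w \<in> G" using inG w by blast
    show "tpow M T' n (\<phi> w) = \<phi> (tpow M T n w)"
    proof (induction n rule: int_induct[where k=0])
      case base then show ?case by simp
    next
      case (step1 i)
      have z: "tpow M T i w \<in> G" by (rule tpow_in[OF iT w])
      have "tpow M T' (i+1) (\<phi> w) = T' (\<phi> (tpow M T i w))"
        using tpow_succ[OF iT' pw] step1 by simp
      also have "\<dots> = \<phi> (T (tpow M T i w))" using G(3) z by simp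
      also have "\<dots> = \<phi> (tpow M T (i+1) w)" using tpow_succ[OF iT w] by simp
      finally show ?case .
    next
      case (step2 i)
      define z where "z = tpow M T (i-1) w"
      have z: "z \<in> G" unfolding z_def by (rule tpow_in[OF iT w])
      have zi: "tpow M T i w = T z" unfolding z_def using tpow_succ[OF iT w, of "i-1"] by simp
      have "tpow M T' (i-1) (\<phi> w) = Ti' (\<phi> (tpow M T i w))"
        using tpow_pred[OF iT' pw] step2 by (simp add: Ti'_def)
      also have "\<dots> = Ti' (T' (\<phi> z))" using G(3) z zi by simp
      also have "\<dots> = \<phi> z" using G(3) inG z by blast
      finally show ?case unfolding z_def .
    qed
  qed
  have "\<forall>x\<in>G. \<forall>y\<in>G. x \<noteq> y \<longrightarrow> (\<exists>n::int. (f \<circ> \<phi>) (tpow M T n x) \<noteq> (f \<circ> \<phi>) (tpow M T n y))"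
  proof (intro ballI impI)
    fix x y assume x: "x \<in> G" and y: "y \<in> G" and xy: "x \<noteq> y"
    have "\<phi> x \<noteq> \<phi> y"
    proof
      assume e: "\<phi> x = \<phi> y"
      have "x = \<psi> (\<phi> x)" using G(3) x by simp
      also have "\<dots> = \<psi> (\<phi> y)" using e by simp
      also have "\<dots> = y" using G(3) y by simp
      finally show False using xy by simp
    qed
    moreover have "\<phi> x \<in> X0" "\<phi> y \<in> X0" using G(3) x y by auto
    ultimately obtain n where "f (tpow M T' n (\<phi> x)) \<noteq> f (tpow M T' n (\<phi> y))" using X0(3) by blast
    then show "\<exists>n::int. (f \<circ> \<phi>) (tpow M T n x) \<noteq> (f \<circ> \<phi>) (tpow M T n y)"
      using key x y by auto
  qed
  then show ?thesis unfolding dyn_generating_def using G(1,2) by blast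
qed

lemma dyn_finite_iff:
  "dyn_entropy M T < \<infinity> \<longleftrightarrow> (\<exists>f::'a \<Rightarrow> nat. f \<in> M \<rightarrow>\<^sub>M count_space UNIV \<and> dyn_generating M T f \<and> shannon_entropy M f < \<infinity>)"
  unfolding dyn_entropy_def INF_less_iff Bex_def mem_Collect_eq conj_assoc ..

lemma conj_fin:
  assumes aT: "aut M T" and aT': "aut M T'" and a\<phi>: "aut M \<phi>"
    and comm: "AE x in M. \<phi> (T x) = T' (\<phi> x)"
    and fin: "dyn_entropy M T' < \<infinity>"
  shows "dyn_entropy M T < \<infinity>"
proof -
  obtain f :: "'a \<Rightarrow> nat" where f: "f \<in> M \<rightarrow>\<^sub>M count_space UNIV" "dyn_generating M T' f" "shannon_entropy M f < \<infinity>"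
    using dyn_finite_iff[THEN iffD1, OF fin] by blast
  have mp: "\<phi> \<in> M \<rightarrow>\<^sub>M M" "distr M M \<phi> = M" using aut_meas[OF a\<phi>] by blast+
  have "f \<circ> \<phi> \<in> M \<rightarrow>\<^sub>M count_space UNIV" by (rule measurable_comp[OF mp(1) f(1)])
  moreover have "dyn_generating M T (f \<circ> \<phi>)" by (rule conj_gen[OF aT aT' a\<phi> comm f(2)])
  moreover have "shannon_entropy M (f \<circ> \<phi>) < \<infinity>"
    using entropy_comp_mp[OF mp f(1)] f(3) by simp
  ultimately show ?thesis by (intro dyn_finite_iff[THEN iffD2]) blast
qed



lemma part1_gen:
  fixes f :: "'a \<Rightarrow> 'b" and c :: "'a \<Rightarrow> int"
  assumes aT: "aut M T" and fg: "full_group_cocycle M T U c" and gen: "dyn_generating M U f"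
  shows "dyn_generating M T (\<lambda>x. (f x, c x))"
proof -
  obtain X0 where X0: "X0 \<in> sets M" "emeasure M (space M - X0) = 0"
    "\<forall>x\<in>X0. \<forall>y\<in>X0. x \<noteq> y \<longrightarrow> (\<exists>n::int. f (tpow M U n x) \<noteq> f (tpow M U n y))"
    using gen unfolding dyn_generating_def by blast
  have aU: "aut M U" and cU: "AE x in M. U x = tpow M T (c x) x"
    using fg unfolding full_group_cocycle_def by auto
  define Ti where "Ti = aut_inv M T"
  define Ui where "Ui = aut_inv M U"
  note sT = aut_inv_spec[OF aT, folded Ti_def]
  note sU = aut_inv_spec[OF aU, folded Ui_def]
  define g :: "nat \<Rightarrow> 'a \<Rightarrow> 'a" where
    "g = (\<lambda>i. case i of 0 \<Rightarrow> T | Suc 0 \<Rightarrow> Ti | _ \<Rightarrow> Ui)"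
  have m1: "T \<in> M \<rightarrow>\<^sub>M M \<and> distr M M T = M" by (rule aut_meas[OF aT])
  have m4: "Ti \<in> M \<rightarrow>\<^sub>M M \<and> distr M M Ti = M" using sT by blast
  have m5: "Ui \<in> M \<rightarrow>\<^sub>M M \<and> distr M M Ui = M" using sU by blast
  have gm: "\<And>i. g i \<in> M \<rightarrow>\<^sub>M M \<and> distr M M (g i) = M"
  proof -
    fix i show "g i \<in> M \<rightarrow>\<^sub>M M \<and> distr M M (g i) = M"
      unfolding g_def using m1 m4 m5 by (simp split: nat.split)
  qed
  have "AE x in M. (Ti (T x) = x \<and> T (Ti x) = x \<and> Ui (U x) = x \<and> U (Ui x) = x
      \<and> U x = tpow M T (c x) x \<and> x \<in> X0)"
  proof -
    have a1: "AE x in M. Ti (T x) = x" "AE x in M. T (Ti x) = x" using sT by blast+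
    have a2: "AE x in M. Ui (U x) = x" "AE x in M. U (Ui x) = x" using sU by blast+
    show ?thesis by (intro eventually_conj a1 a2 cU conull_AE[OF X0(2,1)])
  qed
  then obtain G where G: "G \<in> sets M" "emeasure M (space M - G) = 0"
    "\<forall>x\<in>G. Ti (T x) = x \<and> T (Ti x) = x \<and> Ui (U x) = x \<and> U (Ui x) = x
      \<and> U x = tpow M T (c x) x \<and> x \<in> X0"
    "\<forall>i. \<forall>x\<in>G. g i x \<in> G"
    using inv_set[of g M] gm by blast
  have inG: "\<And>x. x \<in> G \<Longrightarrow> T x \<in> G \<and> Ti x \<in> G \<and> Ui x \<in> G"
  proof -
    fix x assume x: "x \<in> G"
    show "T x \<in> G \<and> Ti x \<in> G \<and> Ui x \<in> G"
      using G(4)[rule_format, OF x, of 0] G(4)[rule_format, OF x, of 1]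
        G(4)[rule_format, OF x, of 2]
      by (simp add: g_def numeral_eq_Suc)
  qed
  have iT0: "inv_on G T Ti" unfolding inv_on_def using G(3) inG by blast
  have iT: "inv_on G T (aut_inv M T)" using iT0 by (simp add: Ti_def)
  have UG: "U x \<in> G" if x: "x \<in> G" for x
  proof -
    have "U x = tpow M T (c x) x" using G(3) x by blast
    then show ?thesis using tpow_in[OF iT x] by simp
  qed
  have iU0: "inv_on G U Ui" unfolding inv_on_def using G(3) inG UG by blast
  have iU: "inv_on G U (aut_inv M U)" using iU0 by (simp add: Ui_def)
  have sep: "x = y" if x: "x \<in> G" and y: "y \<in> G"
     and H: "\<forall>n. f (tpow M T n x) = f (tpow M T n y) \<and> c (tpow M T n x) = c (tpow M T n y)" for x y
  proof -
    have claim: "\<exists>m. tpow M U k x = tpow M T m x \<and> tpow M U k y = tpow M T m y" for k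
    proof (induction k rule: int_induct[where k=0])
      case base
      then show ?case by (intro exI[of _ 0]) simp
    next
      case (step1 k)
      then obtain m where m: "tpow M U k x = tpow M T m x" "tpow M U k y = tpow M T m y" by blast
      define x' where "x' = tpow M T m x"
      define y' where "y' = tpow M T m y"
      have x': "x' \<in> G" "y' \<in> G" unfolding x'_def y'_def using tpow_in[OF iT] x y by auto
      have "tpow M U (k+1) x = U x'" using tpow_succ[OF iU x] m x'_def by simp
      also have "\<dots> = tpow M T (c x') x'" using G(3) x' by blast
      also have "\<dots> = tpow M T (c x' + m) x" unfolding x'_def by (rule tpow_add[OF iT x, symmetric])
      finally have 1: "tpow M U (k+1) x = tpow M T (c x' + m) x" .
      have "tpow M U (k+1) y = U y'" using tpow_succ[OF iU y] m y'_def by simp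
      also have "\<dots> = tpow M T (c y') y'" using G(3) x' by blast
      also have "\<dots> = tpow M T (c y' + m) y" unfolding y'_def by (rule tpow_add[OF iT y, symmetric])
      finally have 2: "tpow M U (k+1) y = tpow M T (c x' + m) y"
        using H unfolding x'_def y'_def by simp
      show ?case using 1 2 by blast
    next
      case (step2 k)
      then obtain m where m: "tpow M U k x = tpow M T m x" "tpow M U k y = tpow M T m y" by blast
      define x' where "x' = tpow M T m x"
      define y' where "y' = tpow M T m y"
      have x': "x' \<in> G" "y' \<in> G" unfolding x'_def y'_def using tpow_in[OF iT] x y by auto
      define z where "z = Ui x'"
      have z: "z \<in> G" using inG x' z_def by blast
      have "U (Ui x') = x'" using G(3) x'(1) by blast
      then have "x' = U z" unfolding z_def by simp
      also have "\<dots> = tpow M T (c z) z" using G(3) z by blast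
      finally have xz: "x' = tpow M T (c z) z" .
      have "tpow M T (- c z) x' = tpow M T (- c z + c z) z" unfolding xz by (rule tpow_add[OF iT z, symmetric])
      then have "z = tpow M T (- c z) x'" by simp
      also have "\<dots> = tpow M T (- c z + m) x" unfolding x'_def by (rule tpow_add[OF iT x, symmetric])
      also have "\<dots> = tpow M T (m - c z) x" by (simp add: algebra_simps)
      finally have zx: "z = tpow M T (m - c z) x" .
      define w where "w = tpow M T (m - c z) y"
      have w: "w \<in> G" unfolding w_def using tpow_in[OF iT y] .
      have cw: "c w = c z"
      proof -
        have "c (tpow M T (m - c z) x) = c (tpow M T (m - c z) y)" using H by blast
        then show ?thesis using zx w_def by simp
      qed
      have "U w = tpow M T (c w) w" using G(3) w by blast
      then have "U w = tpow M T (c z) w" using cw by simp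
      also have "\<dots> = tpow M T (c z + (m - c z)) y" unfolding w_def by (rule tpow_add[OF iT y, symmetric])
      also have "\<dots> = y'" unfolding y'_def by simp
      finally have "Ui (U w) = Ui y'" by simp
      moreover have "Ui (U w) = w" using G(3) w by blast
      ultimately have "Ui y' = w" by simp
      then have 2: "tpow M U (k-1) y = tpow M T (m - c z) y"
        using tpow_pred[OF iU y] m y'_def w_def Ui_def by simp
      have 1: "tpow M U (k-1) x = tpow M T (m - c z) x"
        using tpow_pred[OF iU x] m x'_def zx z_def Ui_def by simp
      show ?case using 1 2 by blast
    qed
    show "x = y"
    proof (rule ccontr)
      assume "x \<noteq> y"
      then obtain k where k: "f (tpow M U k x) \<noteq> f (tpow M U k y)" using X0(3) G(3) x y by blast
      obtain m where "tpow M U k x = tpow M T m x \<and> tpow M U k y = tpow M T m y" using claim by blast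
      then show False using k H[rule_format, of m] by simp
    qed
  qed
  have "\<forall>x\<in>G. \<forall>y\<in>G. x \<noteq> y \<longrightarrow> (\<exists>n::int. (f (tpow M T n x), c (tpow M T n x)) \<noteq> (f (tpow M T n y), c (tpow M T n y)))"
    using sep by blast
  then show ?thesis unfolding dyn_generating_def using G(1,2) by blast
qed



lemma sum_preimage:
  fixes g :: "'a \<Rightarrow> 'b::countable"
  assumes "finite_measure M" "g \<in> M \<rightarrow>\<^sub>M count_space UNIV" "A \<in> sets M"
  shows "(\<integral>\<^sup>+ j. ennreal (measure M (g -` {j} \<inter> A)) \<partial>count_space UNIV) = ennreal (measure M A)"
proof -
  have As: "A \<subseteq> space M" using assms(3) sets.sets_into_space by blast
  have X: "\<And>j. g -` {j} \<inter> A \<in> sets M"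
  proof -
    fix j
    have "g -` {j} \<inter> A = (g -` {j} \<inter> space M) \<inter> A" using As by blast
    then show "g -` {j} \<inter> A \<in> sets M" using assms(2,3) by (auto simp: measurable_sets)
  qed
  have "emeasure M (\<Union>j\<in>UNIV. g -` {j} \<inter> A) = (\<integral>\<^sup>+j. emeasure M (g -` {j} \<inter> A) \<partial>count_space UNIV)"
    by (rule emeasure_UN_countable) (auto simp: X disjoint_family_on_def)
  moreover have "(\<Union>j\<in>UNIV. g -` {j} \<inter> A) = A" by blast
  ultimately show ?thesis
    using finite_measure.emeasure_eq_measure[OF assms(1)] by simp
qed

lemma ent_ineq:
  fixes r p q :: real
  assumes "0 \<le> r" "r \<le> p" "p \<le> 1" "r \<le> q" "q \<le> 1"
  shows "ennreal (- r * ln r) \<le> ennreal (r * - ln p) + ennreal (r * - ln q) + ennreal (p * q)"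
proof (cases "r = 0")
  case True then show ?thesis by simp
next
  case False
  then have r: "0 < r" using assms by simp
  have p: "0 < p" and q: "0 < q" using assms r by auto
  have lp: "ln p \<le> 0" "ln q \<le> 0" using p q assms by auto
  have "ln (p*q/r) \<le> p*q/r - 1" using p q r by (intro ln_le_minus_one) auto
  moreover have "ln (p*q/r) = ln p + ln q - ln r" using p q r by (simp add: ln_div ln_mult)
  ultimately have "r * (ln p + ln q - ln r) \<le> r * (p*q/r - 1)" using r by (intro mult_left_mono) auto
  also have "\<dots> = p*q - r" using r by (simp add: field_simps)
  finally have "- r * ln r \<le> r * - ln p + r * - ln q + p * q" using r by (simp add: algebra_simps)
  moreover have "0 \<le> r * - ln p" "0 \<le> r * - ln q" "0 \<le> p * q"
    using mult_nonneg_nonpos[of r "ln p"] mult_nonneg_nonpos[of r "ln q"] r p q lp by auto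
  ultimately show ?thesis by (simp add: ennreal_plus[symmetric] del: ennreal_plus)
qed



lemma entropy_pair:
  fixes f :: "'a \<Rightarrow> 'b::countable" and c :: "'a \<Rightarrow> 'c::countable"
  assumes FM: "finite_measure M" and P1: "emeasure M (space M) = 1" and f: "f \<in> M \<rightarrow>\<^sub>M count_space UNIV" and c: "c \<in> M \<rightarrow>\<^sub>M count_space UNIV"
  shows "shannon_entropy M (\<lambda>x. (f x, c x)) \<le> shannon_entropy M f + shannon_entropy M c + 1"
proof -
  define p where "p i = measure M (f -` {i} \<inter> space M)" for i
  define q where "q j = measure M (c -` {j} \<inter> space M)" for j
  define r where "r i j = measure M ((\<lambda>x. (f x, c x)) -` {(i,j)} \<inter> space M)" for i j
  have fs: "\<And>i. f -` {i} \<inter> space M \<in> sets M" using f by (simp add: measurable_sets)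
  have cs: "\<And>j. c -` {j} \<inter> space M \<in> sets M" using c by (simp add: measurable_sets)
  have r1: "r i j = measure M (c -` {j} \<inter> (f -` {i} \<inter> space M))" for i j
    unfolding r_def by (intro arg_cong[where f="measure M"]) auto
  have r2: "r i j = measure M (f -` {i} \<inter> (c -` {j} \<inter> space M))" for i j
    unfolding r_def by (intro arg_cong[where f="measure M"]) auto
  have Sr: "(\<integral>\<^sup>+ j. ennreal (r i j) \<partial>count_space UNIV) = ennreal (p i)" for i
    unfolding r1 p_def by (rule sum_preimage[OF FM c fs])
  have Sr2: "(\<integral>\<^sup>+ i. ennreal (r i j) \<partial>count_space UNIV) = ennreal (q j)" for j
    unfolding r2 q_def by (rule sum_preimage[OF FM f cs])
  have one: "measure M (space M) = 1" using P1 finite_measure.emeasure_eq_measure[OF FM] by simp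
  have Sp: "(\<integral>\<^sup>+ i. ennreal (p i) \<partial>count_space UNIV) = 1"
    unfolding p_def using sum_preimage[OF FM f sets.top] one by simp
  have Sq: "(\<integral>\<^sup>+ j. ennreal (q j) \<partial>count_space UNIV) = 1"
    unfolding q_def using sum_preimage[OF FM c sets.top] one by simp
  have le1: "measure M A \<le> 1" for A using finite_measure.bounded_measure[OF FM, of A] one by simp
  have rp: "r i j \<le> p i" for i j unfolding r1 p_def
    using FM fs by (intro finite_measure.finite_measure_mono) auto
  have rq: "r i j \<le> q j" for i j unfolding r2 q_def
    using FM cs by (intro finite_measure.finite_measure_mono) auto
  have rnn: "0 \<le> r i j" for i j unfolding r_def by (rule measure_nonneg)
  have pnn: "0 \<le> p i" for i unfolding p_def by (rule measure_nonneg)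
  have qnn: "0 \<le> q j" for j unfolding q_def by (rule measure_nonneg)
  have lnle: "0 \<le> - ln x" if "0 \<le> x" "x \<le> 1" for x :: real
  proof (cases "x = 0")
    case False then show ?thesis using that by simp
  qed simp
  have lp: "0 \<le> - ln (p i)" for i
    unfolding p_def by (rule lnle[OF measure_nonneg le1])
  have lq: "0 \<le> - ln (q j)" for j
    unfolding q_def by (rule lnle[OF measure_nonneg le1])
  have "shannon_entropy M (\<lambda>x. (f x, c x)) = (\<integral>\<^sup>+ i. \<integral>\<^sup>+ j. ennreal (- r i j * ln (r i j)) \<partial>count_space UNIV \<partial>count_space UNIV)"
    using nn_integral_fst_count_space[of "\<lambda>ij. ennreal (- r (fst ij) (snd ij) * ln (r (fst ij) (snd ij)))"]
    unfolding shannon_entropy_def r_def by simp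
  also have "\<dots> \<le> (\<integral>\<^sup>+ i. \<integral>\<^sup>+ j. ennreal (r i j * - ln (p i)) + ennreal (r i j * - ln (q j)) + ennreal (p i * q j) \<partial>count_space UNIV \<partial>count_space UNIV)"
    using rp rq le1 unfolding p_def q_def
    by (intro nn_integral_mono ent_ineq) (auto simp: r_def)
  also have "\<dots> = (\<integral>\<^sup>+ i. \<integral>\<^sup>+ j. ennreal (r i j * - ln (p i)) \<partial>count_space UNIV \<partial>count_space UNIV)
     + (\<integral>\<^sup>+ i. \<integral>\<^sup>+ j. ennreal (r i j * - ln (q j)) \<partial>count_space UNIV \<partial>count_space UNIV)
     + (\<integral>\<^sup>+ i. \<integral>\<^sup>+ j. ennreal (p i * q j) \<partial>count_space UNIV \<partial>count_space UNIV)"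
    by (simp add: nn_integral_add)
  also have "(\<integral>\<^sup>+ i. \<integral>\<^sup>+ j. ennreal (r i j * - ln (p i)) \<partial>count_space UNIV \<partial>count_space UNIV) = shannon_entropy M f"
  proof -
    have "(\<integral>\<^sup>+ j. ennreal (r i j * - ln (p i)) \<partial>count_space UNIV) = ennreal (- p i * ln (p i))" for i
    proof -
      have "(\<integral>\<^sup>+ j. ennreal (r i j * - ln (p i)) \<partial>count_space UNIV) = (\<integral>\<^sup>+ j. ennreal (- ln (p i)) * ennreal (r i j) \<partial>count_space UNIV)"
        by (intro nn_integral_cong) (simp only: mult.commute[of "r i _"] ennreal_mult[OF lp rnn])
      also have "\<dots> = ennreal (- ln (p i)) * ennreal (p i)" by (simp add: nn_integral_cmult Sr)
      also have "\<dots> = ennreal (- ln (p i) * p i)" by (simp only: ennreal_mult[OF lp pnn])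
      also have "\<dots> = ennreal (- p i * ln (p i))" by (simp add: algebra_simps)
      finally show ?thesis .
    qed
    then show ?thesis unfolding shannon_entropy_def p_def by simp
  qed
  also have "(\<integral>\<^sup>+ i. \<integral>\<^sup>+ j. ennreal (r i j * - ln (q j)) \<partial>count_space UNIV \<partial>count_space UNIV) = shannon_entropy M c"
  proof -
    have "(\<integral>\<^sup>+ i. ennreal (r i j * - ln (q j)) \<partial>count_space UNIV) = ennreal (- q j * ln (q j))" for j
    proof -
      have "(\<integral>\<^sup>+ i. ennreal (r i j * - ln (q j)) \<partial>count_space UNIV) = (\<integral>\<^sup>+ i. ennreal (- ln (q j)) * ennreal (r i j) \<partial>count_space UNIV)"
        by (intro nn_integral_cong) (simp only: mult.commute[of "r _ j"] ennreal_mult[OF lq rnn])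
      also have "\<dots> = ennreal (- ln (q j)) * ennreal (q j)" by (simp add: nn_integral_cmult Sr2)
      also have "\<dots> = ennreal (- ln (q j) * q j)" by (simp only: ennreal_mult[OF lq qnn])
      also have "\<dots> = ennreal (- q j * ln (q j))" by (simp add: algebra_simps)
      finally show ?thesis .
    qed
    moreover have "(\<integral>\<^sup>+ i. \<integral>\<^sup>+ j. ennreal (r i j * - ln (q j)) \<partial>count_space UNIV \<partial>count_space UNIV)
       = (\<integral>\<^sup>+ j. \<integral>\<^sup>+ i. ennreal (r i j * - ln (q j)) \<partial>count_space UNIV \<partial>count_space UNIV)"
      using nn_integral_fst_count_space[of "\<lambda>ij. ennreal (r (fst ij) (snd ij) * - ln (q (snd ij)))"]
        nn_integral_snd_count_space[of "\<lambda>ij. ennreal (r (fst ij) (snd ij) * - ln (q (snd ij)))"]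
      by simp
    ultimately show ?thesis unfolding shannon_entropy_def q_def by simp
  qed
  also have "(\<integral>\<^sup>+ i. \<integral>\<^sup>+ j. ennreal (p i * q j) \<partial>count_space UNIV \<partial>count_space UNIV) = 1"
  proof -
    have "(\<integral>\<^sup>+ j. ennreal (p i * q j) \<partial>count_space UNIV) = ennreal (p i)" for i
    proof -
      have "(\<integral>\<^sup>+ j. ennreal (p i * q j) \<partial>count_space UNIV) = (\<integral>\<^sup>+ j. ennreal (p i) * ennreal (q j) \<partial>count_space UNIV)"
        by (intro nn_integral_cong) (simp only: ennreal_mult[OF pnn qnn])
      also have "\<dots> = ennreal (p i)" by (simp add: nn_integral_cmult Sq)
      finally show ?thesis .
    qed
    then show ?thesis using Sp by simp
  qed
  finally show ?thesis .
qed


lemma entropy_to_nat: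
  fixes g :: "'a \<Rightarrow> 'b::countable"
  shows "shannon_entropy M (\<lambda>x. to_nat (g x)) = shannon_entropy M g"
proof -
  define F where "F k = ennreal (- measure M ((\<lambda>x. to_nat (g x)) -` {k} \<inter> space M)
      * ln (measure M ((\<lambda>x. to_nat (g x)) -` {k} \<inter> space M)))" for k
  have F0: "F k = 0" if "k \<notin> range (to_nat :: 'b \<Rightarrow> nat)" for k
  proof -
    have "(\<lambda>x. to_nat (g x)) -` {k} \<inter> space M = {}"
    proof (rule equals0I)
      fix x assume "x \<in> (\<lambda>x. to_nat (g x)) -` {k} \<inter> space M"
      then have "k = to_nat (g x)" by simp
      then show False using that by simp
    qed
    then show ?thesis unfolding F_def by simp
  qed
  have Fb: "F (to_nat b) = ennreal (- measure M (g -` {b} \<inter> space M) * ln (measure M (g -` {b} \<inter> space M)))" for b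
  proof -
    have "(\<lambda>x. to_nat (g x)) -` {to_nat b} \<inter> space M = g -` {b} \<inter> space M" by auto
    then show ?thesis unfolding F_def by simp
  qed
  have "shannon_entropy M (\<lambda>x. to_nat (g x)) = (\<integral>\<^sup>+ k. F k \<partial>count_space UNIV)"
    unfolding shannon_entropy_def F_def by simp
  also have "\<dots> = (\<integral>\<^sup>+ k. F k * indicator (range (to_nat :: 'b \<Rightarrow> nat)) k \<partial>count_space UNIV)"
    by (intro nn_integral_cong) (auto simp: F0 split: split_indicator)
  also have "\<dots> = (\<integral>\<^sup>+ k. F k \<partial>count_space (range (to_nat :: 'b \<Rightarrow> nat)))"
    by (rule nn_integral_count_space_indicator[symmetric]) simp
  also have "\<dots> = (\<integral>\<^sup>+ b. F (to_nat (b::'b)) \<partial>count_space UNIV)"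
    by (rule nn_integral_bij_count_space[symmetric]) (rule bij_betw_imageI[OF inj_to_nat refl])
  also have "\<dots> = shannon_entropy M g"
    unfolding shannon_entropy_def Fb by simp
  finally show ?thesis .
qed

lemma pair_meas:
  fixes f :: "'a \<Rightarrow> 'b::countable" and c :: "'a \<Rightarrow> 'c::countable"
  assumes f: "f \<in> M \<rightarrow>\<^sub>M count_space UNIV" and c: "c \<in> M \<rightarrow>\<^sub>M count_space UNIV"
  shows "(\<lambda>x. to_nat (f x, c x)) \<in> M \<rightarrow>\<^sub>M count_space UNIV"
proof -
  have "(\<lambda>x. (f x, c x)) \<in> M \<rightarrow>\<^sub>M count_space UNIV"
    unfolding measurable_count_space_eq2_countable
  proof (intro conjI ballI)
    fix ij :: "'b \<times> 'c"
    obtain i j where ij: "ij = (i, j)" by (cases ij)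
    have "(\<lambda>x. (f x, c x)) -` {ij} \<inter> space M = (f -` {i} \<inter> space M) \<inter> (c -` {j} \<inter> space M)"
      using ij by auto
    then show "(\<lambda>x. (f x, c x)) -` {ij} \<inter> space M \<in> sets M"
      using f c by (auto simp: measurable_sets)
  qed simp
  moreover have "to_nat \<in> count_space UNIV \<rightarrow>\<^sub>M count_space (UNIV :: nat set)" by simp
  ultimately have "to_nat \<circ> (\<lambda>x. (f x, c x)) \<in> M \<rightarrow>\<^sub>M count_space UNIV" by (rule measurable_comp)
  then show ?thesis by (simp add: comp_def)
qed

lemma part1_fin:
  assumes FM: "finite_measure M" and P1: "emeasure M (space M) = 1"
    and aT: "aut M T" and fg: "full_group_cocycle M T U c" and Hc: "shannon_entropy M c < \<infinity>"
    and fin: "dyn_entropy M U < \<infinity>"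
  shows "dyn_entropy M T < \<infinity>"
proof -
  obtain f :: "'a \<Rightarrow> nat" where f: "f \<in> M \<rightarrow>\<^sub>M count_space UNIV" "dyn_generating M U f" "shannon_entropy M f < \<infinity>"
    using dyn_finite_iff[THEN iffD1, OF fin] by blast
  have c: "c \<in> M \<rightarrow>\<^sub>M count_space UNIV" using fg unfolding full_group_cocycle_def by blast
  define h where "h x = to_nat (f x, c x)" for x
  have hm: "h \<in> M \<rightarrow>\<^sub>M count_space UNIV" unfolding h_def by (rule pair_meas[OF f(1) c])
  have g: "dyn_generating M T (\<lambda>x. (f x, c x))" by (rule part1_gen[OF aT fg f(2)])
  have hg: "dyn_generating M T h"
  proof -
    obtain X0 where X0: "X0 \<in> sets M" "emeasure M (space M - X0) = 0"
      "\<forall>x\<in>X0. \<forall>y\<in>X0. x \<noteq> y \<longrightarrow> (\<exists>n::int. (f (tpow M T n x), c (tpow M T n x)) \<noteq> (f (tpow M T n y), c (tpow M T n y)))"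
      using g unfolding dyn_generating_def by blast
    have "\<forall>x\<in>X0. \<forall>y\<in>X0. x \<noteq> y \<longrightarrow> (\<exists>n::int. h (tpow M T n x) \<noteq> h (tpow M T n y))"
    proof (intro ballI impI)
      fix x y assume "x \<in> X0" "y \<in> X0" "x \<noteq> y"
      then obtain n where n: "(f (tpow M T n x), c (tpow M T n x)) \<noteq> (f (tpow M T n y), c (tpow M T n y))"
        using X0(3) by blast
      have "h (tpow M T n x) \<noteq> h (tpow M T n y)"
      proof
        assume "h (tpow M T n x) = h (tpow M T n y)"
        then have "(f (tpow M T n x), c (tpow M T n x)) = (f (tpow M T n y), c (tpow M T n y))"
          unfolding h_def by (rule injD[OF inj_to_nat])
        then show False using n by contradiction
      qed
      then show "\<exists>n::int. h (tpow M T n x) \<noteq> h (tpow M T n y)" by blast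
    qed
    then show ?thesis unfolding dyn_generating_def using X0(1,2) by blast
  qed
  have "shannon_entropy M h = shannon_entropy M (\<lambda>x. (f x, c x))"
    unfolding h_def by (rule entropy_to_nat)
  also have "\<dots> \<le> shannon_entropy M f + shannon_entropy M c + 1"
    by (rule entropy_pair[OF FM P1 f(1) c])
  also have "\<dots> < \<infinity>" using f(3) Hc by (simp add: ennreal_add_less_top)
  finally have "shannon_entropy M h < \<infinity>" .
  then show ?thesis using hm hg by (intro dyn_finite_iff[THEN iffD2]) blast
qed


lemma stdX_space: "space stdX = {0..1}"
  unfolding stdX_def by (simp add: space_restrict_space)

lemma stdX_one: "emeasure stdX (space stdX) = 1"
proof -
  have "emeasure stdX (space stdX) = emeasure lborel {0..1::real}"
    unfolding stdX_space unfolding stdX_def by (rule emeasure_restrict_space) auto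
  then show ?thesis by simp
qed

lemma stdX_fin: "finite_measure stdX"
  by (rule finite_measureI) (simp add: stdX_one)

lemma part1_std:
  assumes "aut stdX T" "full_group_cocycle stdX T U c" "shannon_entropy stdX c < \<infinity>"
    "dyn_entropy stdX U < \<infinity>"
  shows "dyn_entropy stdX T < \<infinity>"
  by (rule part1_fin[OF stdX_fin stdX_one assms])

theorem mainTheorem6:
  shows "(\<forall>T U c. aperiodic stdX T \<and> dyn_entropy stdX T = \<infinity> \<and>
            full_group_cocycle stdX T U c \<and> shannon_entropy stdX c < \<infinity>
            \<longrightarrow> dyn_entropy stdX U = \<infinity>)
       \<and> (\<forall>T1 T2. aperiodic stdX T1 \<and> aperiodic stdX T2 \<and> shannon_oe stdX T1 T2
            \<longrightarrow> (dyn_entropy stdX T1 < \<infinity> \<longleftrightarrow> dyn_entropy stdX T2 < \<infinity>))"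
proof (intro conjI allI impI)
  fix T U c
  assume A: "aperiodic stdX T \<and> dyn_entropy stdX T = \<infinity> \<and>
            full_group_cocycle stdX T U c \<and> shannon_entropy stdX c < \<infinity>"
  have aT: "aut stdX T" using A unfolding aperiodic_def by blast
  show "dyn_entropy stdX U = \<infinity>"
  proof (rule ccontr)
    assume "dyn_entropy stdX U \<noteq> \<infinity>"
    then have "dyn_entropy stdX U < \<infinity>" by (simp add: less_top)
    then have "dyn_entropy stdX T < \<infinity>" using part1_std[OF aT] A by blast
    then show False using A by simp
  qed
next
  fix T1 T2
  assume A: "aperiodic stdX T1 \<and> aperiodic stdX T2 \<and> shannon_oe stdX T1 T2"
  have aT1: "aut stdX T1" and aT2: "aut stdX T2" using A unfolding aperiodic_def by blast+
  obtain S where aS: "aut stdX S" and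
    C: "(\<exists>c. full_group_cocycle stdX T2 (S \<circ> T1 \<circ> aut_inv stdX S) c \<and> shannon_entropy stdX c < \<infinity>)"
    and D: "(\<exists>d. full_group_cocycle stdX (S \<circ> T1 \<circ> aut_inv stdX S) T2 d \<and> shannon_entropy stdX d < \<infinity>)"
    using A unfolding shannon_oe_def Let_def by blast
  define Si where "Si = aut_inv stdX S"
  define T1' where "T1' = S \<circ> T1 \<circ> Si"
  obtain c where c: "full_group_cocycle stdX T2 T1' c" "shannon_entropy stdX c < \<infinity>"
    using C unfolding T1'_def Si_def by blast
  obtain d where d: "full_group_cocycle stdX T1' T2 d" "shannon_entropy stdX d < \<infinity>"
    using D unfolding T1'_def Si_def by blast
  have aT1': "aut stdX T1'" using c(1) unfolding full_group_cocycle_def by blast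
  note sS = aut_inv_spec[OF aS, folded Si_def]
  have aSi: "aut stdX Si" unfolding Si_def by (rule aut_inv_aut[OF aS])
  have mT1: "T1 \<in> stdX \<rightarrow>\<^sub>M stdX" "distr stdX stdX T1 = stdX" using aut_meas[OF aT1] by blast+
  have mSi: "Si \<in> stdX \<rightarrow>\<^sub>M stdX" "distr stdX stdX Si = stdX" using sS by blast+
  have SiS: "AE x in stdX. Si (S x) = x" using sS by blast
  have comm1: "AE x in stdX. S (T1 x) = T1' (S x)"
    using SiS by eventually_elim (simp add: T1'_def)
  have comm2: "AE x in stdX. Si (T1' x) = T1 (Si x)"
  proof -
    have "AE x in stdX. Si (S (T1 x)) = T1 x" by (rule AE_mp_comp[OF mT1 SiS])
    then have "AE x in stdX. Si (S (T1 (Si x))) = T1 (Si x)"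
      by (rule AE_mp_comp[OF mSi, where P="\<lambda>x. Si (S (T1 x)) = T1 x"])
    then show ?thesis by eventually_elim (simp add: T1'_def)
  qed
  show "dyn_entropy stdX T1 < \<infinity> \<longleftrightarrow> dyn_entropy stdX T2 < \<infinity>"
  proof
    assume "dyn_entropy stdX T1 < \<infinity>"
    then have "dyn_entropy stdX T1' < \<infinity>" by (rule conj_fin[OF aT1' aT1 aSi comm2])
    then show "dyn_entropy stdX T2 < \<infinity>" by (rule part1_std[OF aT2 c])
  next
    assume "dyn_entropy stdX T2 < \<infinity>"
    then have "dyn_entropy stdX T1' < \<infinity>" by (rule part1_std[OF aT1' d])
    then show "dyn_entropy stdX T1 < \<infinity>" by (rule conj_fin[OF aT1 aT1' aS comm1])
  qed
qed

end
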